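(* Let $b\in\mathbb{R}$ and $\varepsilon_0\in(0,1)$ be such that $\det\Delta_\varepsilon(s)\ne0$ for all $\varepsilon\in[0,\varepsilon_0]$ and all $s$ on the line $\Sigma=\{b+iy:y\in\mathbb{R}\}$. Then there is $\varepsilon_1\in(0,\varepsilon_0]$ such that $$\sup\{|s|\,\|\Delta_\varepsilon(s)^{-1}\|:0\le\varepsilon\le\varepsilon_1,\ s\in\Sigma\}<\infty\quad\text{and}\quad \sup\{|s|\,\|D_\varepsilon(s)^{-1}\|:0<\varepsilon\le\varepsilon_1,\ s\in\Sigma\}<\infty.$$
   Context: $L:C([-\tau,0];\mathbb{R}^N)\to\mathbb{R}^N$ is a bounded linear operator; $L(e^{s\cdot}I)$ is the complex $N\times N$ matrix whose $j$-th column is $L$ applied to $\theta\mapsto e^{s\theta}e_j$. $\Delta_\varepsilon(s)=\varepsilon^2s^2I-sI+L(e^{s\cdot}I)$, and for $\varepsilon>0$, $D_\varepsilon(s)$ is the $2N\times2N$ block matrix $\begin{pmatrix}sI&-I\\ \varepsilon^{-2}L(e^{s\cdot}I)&(s-\varepsilon^{-2})I\end{pmatrix}$ (the characteristic matrix of the first-order system equivalent to $\varepsilon^2x''-x'+Lx_t=0$), $I$ the $N\times N$ identity. *)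

theory Defs
  imports "HOL-Analysis.Analysis"
begin

text \<open>Elements of C([-tau,0]; R^N) are represented by functions real => real^'n that are
  continuous on {-tau..0}; the sup norm is SUP over {-tau..0}.\<close>
definition delay_operator :: "real \<Rightarrow> ((real \<Rightarrow> real^'n) \<Rightarrow> real^'n) \<Rightarrow> bool" where
  "delay_operator tau L \<longleftrightarrow>
     (\<forall>\<phi> \<psi>. continuous_on {-tau..0} \<phi> \<longrightarrow> continuous_on {-tau..0} \<psi> \<longrightarrow>
        L (\<lambda>\<theta>. \<phi> \<theta> + \<psi> \<theta>) = L \<phi> + L \<psi>) \<and>
     (\<forall>c \<phi>. continuous_on {-tau..0} \<phi> \<longrightarrow> L (\<lambda>\<theta>. c *\<^sub>R \<phi> \<theta>) = c *\<^sub>R L \<phi>) \<and>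
     (\<exists>C. \<forall>\<phi>. continuous_on {-tau..0} \<phi> \<longrightarrow>
        norm (L \<phi>) \<le> C * (SUP \<theta>\<in>{-tau..0}. norm (\<phi> \<theta>)))"

text \<open>L(e^{s.} I): column j is (the complexification of) L applied to theta -> e^{s theta} e_j.\<close>
definition charM :: "((real \<Rightarrow> real^'n) \<Rightarrow> real^'n) \<Rightarrow> complex \<Rightarrow> complex^'n^'n" where
  "charM L s = (\<chi> k j. Complex ((L (\<lambda>\<theta>. Re (exp (s * of_real \<theta>)) *\<^sub>R axis j 1)) $ k)
                                 ((L (\<lambda>\<theta>. Im (exp (s * of_real \<theta>)) *\<^sub>R axis j 1)) $ k))"

definition Delta :: "((real \<Rightarrow> real^'n) \<Rightarrow> real^'n) \<Rightarrow> real \<Rightarrow> complex \<Rightarrow> complex^'n^'n" where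
  "Delta L eps s = (\<chi> k j. (if k = j then (of_real eps)^2 * s^2 - s else 0) + charM L s $ k $ j)"

text \<open>D_eps(s) = [[s I, -I], [eps^-2 L(e^{s.} I), (s - eps^-2) I]], indexed by 'n + 'n
  (Inl = first block, Inr = second block).\<close>
definition Dmat :: "((real \<Rightarrow> real^'n) \<Rightarrow> real^'n) \<Rightarrow> real \<Rightarrow> complex \<Rightarrow> complex^('n + 'n)^('n + 'n)" where
  "Dmat L eps s = (\<chi> p q. case (p, q) of
      (Inl k, Inl j) \<Rightarrow> (if k = j then s else 0)
    | (Inl k, Inr j) \<Rightarrow> (if k = j then -1 else 0)
    | (Inr k, Inl j) \<Rightarrow> charM L s $ k $ j / (of_real eps)^2
    | (Inr k, Inr j) \<Rightarrow> (if k = j then s - 1 / (of_real eps)^2 else 0))"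

definition mnorm :: "complex^'m^'n \<Rightarrow> real" where
  "mnorm A = onorm (\<lambda>x. A *v x)"

end

theory Submission
  imports Defs
begin


lemma cos_lip: "\<bar>cos (a::real) - cos c\<bar> \<le> \<bar>a - c\<bar>"
proof -
  have "\<bar>cos a - cos c\<bar> = 2 * \<bar>sin ((a + c) / 2)\<bar> * \<bar>sin ((c - a) / 2)\<bar>"
    by (simp add: cos_diff_cos abs_mult)
  also have "\<dots> \<le> 2 * 1 * \<bar>(c - a)/2\<bar>"
    by (intro mult_mono abs_sin_x_le_abs_x abs_sin_le_one) auto
  finally show ?thesis by simp
qed

lemma sin_lip: "\<bar>sin (a::real) - sin c\<bar> \<le> \<bar>a - c\<bar>"
proof -
  have "\<bar>sin a - sin c\<bar> = 2 * \<bar>sin ((a - c) / 2)\<bar> * \<bar>cos ((a + c) / 2)\<bar>"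
    by (simp add: sin_diff_sin abs_mult)
  also have "\<dots> \<le> 2 * \<bar>(a - c)/2\<bar> * 1"
    by (intro mult_mono abs_sin_x_le_abs_x abs_cos_le_one) auto
  finally show ?thesis by simp
qed

lemma mv_scaleR: "(A::complex^'m^'k) *v (r *\<^sub>R x) = r *\<^sub>R (A *v x)"
  using linear_iff matrix_vector_mul_linear by blast

lemma norm_cscale: "norm (\<chi> k. (c::complex) * x $ k) = cmod c * norm (x::complex^'m)"
  unfolding norm_vec_def by (simp add: L2_set_right_distrib norm_mult)

lemma inv_props:
  fixes A :: "complex^'m^'m"
  assumes "invertible A"
  shows "A ** matrix_inv A = mat 1" "A *v (matrix_inv A *v y) = y"
proof -
  show 1: "A ** matrix_inv A = mat 1"
    using assms unfolding invertible_def matrix_inv_def by (rule someI2_ex) auto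
  show "A *v (matrix_inv A *v y) = y"
    by (simp add: matrix_vector_mul_assoc 1)
qed

lemma lower_invertible:
  fixes A :: "complex^'m^'m"
  assumes "c > 0" "\<And>x. c * norm x \<le> norm (A *v x)"
  shows "invertible A"
proof -
  have "\<forall>x. A *v x = 0 \<longrightarrow> x = 0"
  proof (intro allI impI)
    fix x assume "A *v x = 0"
    with assms(2)[of x] have "c * norm x \<le> 0" by simp
    with assms(1) show "x = 0" by (simp add: mult_le_0_iff)
  qed
  then show ?thesis
    unfolding invertible_left_inverse matrix_left_invertible_ker by blast
qed

lemma scaled_onorm:
  fixes A :: "complex^'m^'k"
  assumes "a \<ge> 0" "B \<ge> 0" "\<And>y. a * norm (A *v y) \<le> B * norm y"
  shows "a * mnorm A \<le> B"
proof (cases "a = 0")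
  case True then show ?thesis using assms by simp
next
  case False
  then have a: "a > 0" using assms by simp
  have "mnorm A \<le> B / a" unfolding mnorm_def
  proof (rule onorm_bound)
    show "0 \<le> B / a" using a assms by simp
    fix y show "norm (A *v y) \<le> B / a * norm y"
      using assms(3)[of y] a by (simp add: field_simps)
  qed
  then show ?thesis using a by (simp add: field_simps)
qed

lemma inv_bound:
  fixes A :: "complex^'m^'m"
  assumes "invertible A" "a \<ge> 0" "B \<ge> 0" "\<And>x. a * norm x \<le> B * norm (A *v x)"
  shows "a * mnorm (matrix_inv A) \<le> B"
proof (rule scaled_onorm)
  fix y
  show "a * norm (matrix_inv A *v y) \<le> B * norm y"
    using assms(4)[of "matrix_inv A *v y"] inv_props(2)[OF assms(1), of y] by simp
qed (use assms in auto)

lemma split_norm: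
  fixes w :: "complex^('m::finite + 'm)"
  shows "norm w \<le> norm (\<chi> k. w $ Inl k) + norm (\<chi> k. w $ Inr k)"
    "norm (\<chi> k. w $ Inl k) \<le> norm w" "norm (\<chi> k. w $ Inr k) \<le> norm w"
proof -
  have e: "norm w = sqrt ((\<Sum>k\<in>UNIV. (cmod (w $ Inl k))\<^sup>2) + (\<Sum>k\<in>UNIV. (cmod (w $ Inr k))\<^sup>2))"
    unfolding norm_vec_def L2_set_def
    by (subst UNIV_Plus_UNIV[symmetric], subst sum.Plus) (auto simp: o_def)
  have l: "norm (\<chi> k. w $ Inl k) = sqrt (\<Sum>k\<in>UNIV. (cmod (w $ Inl k))\<^sup>2)"
    unfolding norm_vec_def L2_set_def by simp
  have r: "norm (\<chi> k. w $ Inr k) = sqrt (\<Sum>k\<in>UNIV. (cmod (w $ Inr k))\<^sup>2)"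
    unfolding norm_vec_def L2_set_def by simp
  show "norm w \<le> norm (\<chi> k. w $ Inl k) + norm (\<chi> k. w $ Inr k)"
    unfolding e l r by (rule sqrt_add_le_add_sqrt) (auto intro: sum_nonneg)
  show "norm (\<chi> k. w $ Inl k) \<le> norm w"
    unfolding e l by (rule real_sqrt_le_mono) (auto intro: sum_nonneg)
  show "norm (\<chi> k. w $ Inr k) \<le> norm w"
    unfolding e r by (rule real_sqrt_le_mono) (auto intro: sum_nonneg)
qed

lemma mat_bound:
  fixes M :: "complex^'m^'k"
  assumes "\<And>k j. cmod (M $ k $ j) \<le> Kc"
  shows "norm (M *v x) \<le> (real CARD('k) * real CARD('m) * Kc) * norm x"
proof -
  have c: "cmod ((M *v x) $ k) \<le> real CARD('m) * Kc * norm x" for k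
  proof -
    have "cmod ((M *v x) $ k) \<le> (\<Sum>j\<in>UNIV. cmod (M $ k $ j * x $ j))"
      unfolding matrix_vector_mult_def by (simp add: norm_sum)
    also have "\<dots> \<le> (\<Sum>j\<in>(UNIV::'m set). Kc * norm x)"
    proof (intro sum_mono)
      fix j
      have "cmod (x $ j) \<le> norm x" by (rule Finite_Cartesian_Product.norm_nth_le)
      moreover have "0 \<le> Kc" using assms[of k j] norm_ge_zero order_trans by blast
      ultimately show "cmod (M $ k $ j * x $ j) \<le> Kc * norm x"
        unfolding norm_mult by (intro mult_mono assms) auto
    qed
    finally show ?thesis by simp
  qed
  have "norm (M *v x) \<le> (\<Sum>k\<in>UNIV. cmod ((M *v x) $ k))"
    unfolding norm_vec_def by (rule L2_set_le_sum) simp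
  also have "\<dots> \<le> (\<Sum>k\<in>(UNIV::'k set). real CARD('m) * Kc * norm x)"
    by (intro sum_mono c)
  finally show ?thesis by simp
qed



lemma L_sub:
  assumes "delay_operator tau L" "continuous_on {-tau..0} \<phi>" "continuous_on {-tau..0} \<psi>"
  shows "L \<phi> - L \<psi> = L (\<lambda>\<theta>. \<phi> \<theta> - \<psi> \<theta>)"
proof -
  have c: "continuous_on {-tau..0} (\<lambda>\<theta>. \<phi> \<theta> - \<psi> \<theta>)"
    using assms by (intro continuous_intros)
  have "L \<phi> = L (\<lambda>\<theta>. (\<phi> \<theta> - \<psi> \<theta>) + \<psi> \<theta>)" by simp
  also have "\<dots> = L (\<lambda>\<theta>. \<phi> \<theta> - \<psi> \<theta>) + L \<psi>"
    using assms(1) c assms(3) unfolding delay_operator_def by blast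
  finally show ?thesis by simp
qed

lemma L_bound:
  assumes "delay_operator tau L" "tau > 0"
  shows "\<exists>C\<ge>0. \<forall>\<phi> a. continuous_on {-tau..0} \<phi> \<longrightarrow> (\<forall>\<theta>\<in>{-tau..0}. norm (\<phi> \<theta>) \<le> a)
            \<longrightarrow> norm (L \<phi>) \<le> C * a"
proof -
  obtain C0 where C0: "\<forall>\<phi>. continuous_on {-tau..0} \<phi> \<longrightarrow>
        norm (L \<phi>) \<le> C0 * (SUP \<theta>\<in>{-tau..0}. norm (\<phi> \<theta>))"
    using assms(1) unfolding delay_operator_def by blast
  show ?thesis
  proof (intro exI[of _ "max C0 0"] conjI allI impI)
    fix \<phi> :: "real \<Rightarrow> real^'a" and a :: real
    assume c: "continuous_on {-tau..0} \<phi>" and b: "\<forall>\<theta>\<in>{-tau..0}. norm (\<phi> \<theta>) \<le> a"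
    have ne: "{-tau..0} \<noteq> {}" using assms(2) by simp
    have S: "(SUP \<theta>\<in>{-tau..0}. norm (\<phi> \<theta>)) \<le> a"
      using ne b by (intro cSUP_least) auto
    have S0: "0 \<le> (SUP \<theta>\<in>{-tau..0}. norm (\<phi> \<theta>))"
    proof -
      have "bdd_above ((\<lambda>\<theta>. norm (\<phi> \<theta>)) ` {-tau..0})"
        using b by (auto intro: bdd_aboveI2)
      then have "norm (\<phi> 0) \<le> (SUP \<theta>\<in>{-tau..0}. norm (\<phi> \<theta>))"
        using assms(2) by (intro cSUP_upper) auto
      then show ?thesis by (rule order_trans[OF norm_ge_zero])
    qed
    have "norm (L \<phi>) \<le> C0 * (SUP \<theta>\<in>{-tau..0}. norm (\<phi> \<theta>))" using C0 c by blast
    also have "\<dots> \<le> max C0 0 * (SUP \<theta>\<in>{-tau..0}. norm (\<phi> \<theta>))"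
      using S0 by (intro mult_right_mono) auto
    also have "\<dots> \<le> max C0 0 * a" using S by (intro mult_left_mono) auto
    finally show "norm (L \<phi>) \<le> max C0 0 * a" .
  qed simp
qed

lemma exp_le_Ef:
  fixes tau b \<theta> :: real
  assumes "tau > 0" "\<theta> \<in> {-tau..0}"
  shows "exp (b * \<theta>) \<le> exp (\<bar>b\<bar> * tau)"
proof -
  have "\<bar>\<theta>\<bar> \<le> tau" using assms by (auto simp: abs_le_iff)
  then have "\<bar>b\<bar> * \<bar>\<theta>\<bar> \<le> \<bar>b\<bar> * tau" by (intro mult_left_mono) auto
  moreover have "b * \<theta> \<le> \<bar>b\<bar> * \<bar>\<theta>\<bar>" by (metis abs_ge_self abs_mult)
  ultimately show ?thesis by simp
qed

lemma cmod_Complex_le: "cmod (Complex a c) \<le> \<bar>a\<bar> + \<bar>c\<bar>"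
  using cmod_le[of "Complex a c"] by simp

lemma Complex_diff': "Complex a c - Complex a' c' = Complex (a - a') (c - c')"
  by (simp add: complex_eq_iff)

lemma exp_line:
  "Re (exp (Complex b y * complex_of_real \<theta>)) = exp (b * \<theta>) * cos (y * \<theta>)"
  "Im (exp (Complex b y * complex_of_real \<theta>)) = exp (b * \<theta>) * sin (y * \<theta>)"
proof -
  have "Complex b y * complex_of_real \<theta> = Complex (b*\<theta>) (y*\<theta>)" by (simp add: complex_eq_iff)
  then show "Re (exp (Complex b y * complex_of_real \<theta>)) = exp (b * \<theta>) * cos (y * \<theta>)"
    "Im (exp (Complex b y * complex_of_real \<theta>)) = exp (b * \<theta>) * sin (y * \<theta>)"
    by (simp_all only: Re_exp Im_exp complex.sel)
qed

lemma charM_entry: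
  "charM L (Complex b y) $ k $ j =
     Complex ((L (\<lambda>\<theta>. (exp (b * \<theta>) * cos (y * \<theta>)) *\<^sub>R axis j 1)) $ k)
             ((L (\<lambda>\<theta>. (exp (b * \<theta>) * sin (y * \<theta>)) *\<^sub>R axis j 1)) $ k)"
  unfolding charM_def by (simp only: exp_line vec_lambda_beta)

lemma charM_facts:
  fixes L :: "(real \<Rightarrow> real^'n) \<Rightarrow> real^'n"
  assumes "delay_operator tau L" "tau > 0"
  shows "\<exists>Kc Lc. \<forall>y y' k j. cmod (charM L (Complex b y) $ k $ j) \<le> Kc \<and>
      cmod (charM L (Complex b y) $ k $ j - charM L (Complex b y') $ k $ j) \<le> Lc * \<bar>y - y'\<bar>"
proof -
  obtain C where C0: "C \<ge> 0" and C: "\<And>\<phi> a. continuous_on {-tau..0} \<phi> \<Longrightarrow> (\<forall>\<theta>\<in>{-tau..0}. norm (\<phi> \<theta>) \<le> a)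
            \<Longrightarrow> norm (L \<phi>) \<le> C * a"
    using L_bound[OF assms(1,2)] by blast
  define Ef where "Ef = exp (\<bar>b\<bar> * tau)"
  have Ef: "\<theta> \<in> {-tau..0} \<Longrightarrow> exp (b * \<theta>) \<le> Ef" for \<theta>
    unfolding Ef_def using exp_le_Ef[OF assms(2)] by blast
  have Ef0: "Ef > 0" by (simp add: Ef_def)
  have cont: "continuous_on {-tau..0} (\<lambda>\<theta>. (exp (b * \<theta>) * f (y * \<theta>)) *\<^sub>R (axis j 1 :: real^'n))"
    if "continuous_on UNIV f" for f :: "real \<Rightarrow> real" and y j
    by (intro continuous_intros continuous_on_compose2[OF that]) auto
  have ccos: "continuous_on UNIV (cos :: real \<Rightarrow> real)" and csin: "continuous_on UNIV (sin :: real \<Rightarrow> real)"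
    by (auto intro: continuous_intros)
  have bnd: "\<bar>(L (\<lambda>\<theta>. (exp (b * \<theta>) * f (y * \<theta>)) *\<^sub>R (axis j 1 :: real^'n))) $ k\<bar> \<le> C * Ef"
    if "continuous_on UNIV f" "\<And>x. \<bar>f x\<bar> \<le> 1" for f :: "real \<Rightarrow> real" and y j k
  proof -
    have "norm (L (\<lambda>\<theta>. (exp (b * \<theta>) * f (y * \<theta>)) *\<^sub>R (axis j 1 :: real^'n))) \<le> C * Ef"
    proof (rule C[OF cont[OF that(1)]], intro ballI)
      fix \<theta> :: real assume t: "\<theta> \<in> {-tau..0}"
      have "exp (b * \<theta>) * \<bar>f (y * \<theta>)\<bar> \<le> Ef * 1"
        using Ef[OF t] that(2) Ef0 by (intro mult_mono) auto
      then show "norm ((exp (b * \<theta>) * f (y * \<theta>)) *\<^sub>R (axis j 1 :: real^'n)) \<le> Ef"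
        by (simp add: abs_mult)
    qed
    then show ?thesis by (rule order_trans[OF component_le_norm_cart])
  qed
  have lip: "\<bar>(L (\<lambda>\<theta>. (exp (b * \<theta>) * f (y * \<theta>)) *\<^sub>R (axis j 1 :: real^'n))) $ k
             - (L (\<lambda>\<theta>. (exp (b * \<theta>) * f (y' * \<theta>)) *\<^sub>R (axis j 1 :: real^'n))) $ k\<bar>
        \<le> C * Ef * tau * \<bar>y - y'\<bar>"
    if "continuous_on UNIV f" "\<And>x z. \<bar>f x - f z\<bar> \<le> \<bar>x - z\<bar>" for f :: "real \<Rightarrow> real" and y y' j k
  proof -
    let ?p = "\<lambda>y. (\<lambda>\<theta>. (exp (b * \<theta>) * f (y * \<theta>)) *\<^sub>R (axis j 1 :: real^'n))"
    have e: "(L (?p y)) $ k - (L (?p y')) $ k = (L (\<lambda>\<theta>. ?p y \<theta> - ?p y' \<theta>)) $ k"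
    proof -
      have "L (?p y) - L (?p y') = L (\<lambda>\<theta>. ?p y \<theta> - ?p y' \<theta>)"
        by (rule L_sub[OF assms(1) cont[OF that(1)] cont[OF that(1)]])
      from arg_cong[where f="\<lambda>v. v $ k", OF this] show ?thesis by simp
    qed
    have "norm (L (\<lambda>\<theta>. ?p y \<theta> - ?p y' \<theta>)) \<le> C * (Ef * tau * \<bar>y - y'\<bar>)"
    proof (rule C)
      show "continuous_on {-tau..0} (\<lambda>\<theta>. ?p y \<theta> - ?p y' \<theta>)"
        using cont[OF that(1)] by (rule continuous_on_diff) (rule cont[OF that(1)])
    next
      show "\<forall>\<theta>\<in>{-tau..0}. norm (?p y \<theta> - ?p y' \<theta>) \<le> Ef * tau * \<bar>y - y'\<bar>"
      proof

      fix \<theta> :: real assume t: "\<theta> \<in> {-tau..0}"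
      have "\<bar>f (y * \<theta>) - f (y' * \<theta>)\<bar> \<le> \<bar>y * \<theta> - y' * \<theta>\<bar>" by (rule that(2))
      also have "\<dots> = \<bar>\<theta>\<bar> * \<bar>y - y'\<bar>" by (metis abs_mult left_diff_distrib mult.commute)
      also have "\<dots> \<le> tau * \<bar>y - y'\<bar>" using t by (intro mult_right_mono) auto
      finally have "exp (b * \<theta>) * \<bar>f (y * \<theta>) - f (y' * \<theta>)\<bar> \<le> Ef * (tau * \<bar>y - y'\<bar>)"
        using Ef[OF t] assms(2) Ef0 by (intro mult_mono) auto
      then show "norm (?p y \<theta> - ?p y' \<theta>) \<le> Ef * tau * \<bar>y - y'\<bar>"
        by (simp add: scaleR_diff_left[symmetric] abs_mult right_diff_distrib[symmetric] mult.assoc)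
    qed
    qed
    moreover have "\<bar>(L (\<lambda>\<theta>. ?p y \<theta> - ?p y' \<theta>)) $ k\<bar> \<le> norm (L (\<lambda>\<theta>. ?p y \<theta> - ?p y' \<theta>))"
      by (rule component_le_norm_cart)
    ultimately show ?thesis unfolding e by (simp add: mult.assoc)
  qed
  have A: "cmod (charM L (Complex b y) $ k $ j) \<le> 2 * C * Ef" for y k j
      unfolding charM_entry
      apply (rule order_trans[OF cmod_Complex_le])
      using bnd[OF ccos abs_cos_le_one, where y=y and j=j and k=k] bnd[OF csin abs_sin_le_one, where y=y and j=j and k=k]
      by linarith
  have B: "cmod (charM L (Complex b y) $ k $ j - charM L (Complex b y') $ k $ j) \<le> 2 * C * Ef * tau * \<bar>y - y'\<bar>" for y y' k j
      unfolding charM_entry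
      unfolding Complex_diff'
      apply (rule order_trans[OF cmod_Complex_le])
      using lip[OF ccos cos_lip, where y=y and y'=y' and j=j and k=k] lip[OF csin sin_lip, where y=y and y'=y' and j=j and k=k]
      by linarith
  show ?thesis using A B by blast
qed



lemma Delta_mv:
  "Delta L eps s *v x = (\<chi> k. (of_real eps^2 * s^2 - s) * x$k) + charM L s *v x"
proof -
  have ifm: "(if P then c else 0) * z = (if P then c * z else 0)" for P and c z :: complex by simp
  show ?thesis
    by (simp add: vec_eq_iff matrix_vector_mult_def Delta_def distrib_right sum.distrib ifm)
qed

lemma lip_cont:
  fixes f :: "real \<Rightarrow> complex"
  assumes "\<And>y y'. cmod (f y - f y') \<le> Lc * \<bar>y - y'\<bar>"
  shows "continuous_on UNIV f"
  unfolding continuous_on_iff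
proof (intro ballI allI impI)
  fix x :: real and e :: real assume e: "e > 0"
  show "\<exists>d>0. \<forall>x'\<in>UNIV. dist x' x < d \<longrightarrow> dist (f x') (f x) < e"
  proof (intro exI[of _ "e / (\<bar>Lc\<bar> + 1)"] conjI ballI impI)
    show "e / (\<bar>Lc\<bar> + 1) > 0" using e by simp
    fix x' assume d: "dist x' x < e / (\<bar>Lc\<bar> + 1)"
    have "dist (f x') (f x) \<le> Lc * \<bar>x' - x\<bar>" using assms by (simp add: dist_norm)
    also have "\<dots> \<le> (\<bar>Lc\<bar> + 1) * \<bar>x' - x\<bar>" by (intro mult_right_mono) auto
    also have "\<dots> < (\<bar>Lc\<bar> + 1) * (e / (\<bar>Lc\<bar> + 1))"
      using d by (intro mult_strict_left_mono) (auto simp: dist_real_def)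
    also have "\<dots> = e" by (simp add: field_simps)
    finally show "dist (f x') (f x) < e" .
  qed
qed

lemma compact_lower:
  fixes L :: "(real \<Rightarrow> real^'n) \<Rightarrow> real^'n"
  assumes lip: "\<And>y y' k j. cmod (charM L (Complex b y) $ k $ j - charM L (Complex b y') $ k $ j) \<le> Lc * \<bar>y - y'\<bar>"
    and nz: "\<forall>eps\<in>{0..e1}. \<forall>y. det (Delta L eps (Complex b y)) \<noteq> 0"
    and e1: "0 \<le> e1" and R: "0 \<le> R"
  shows "\<exists>\<delta>>0. \<forall>eps\<in>{0..e1}. \<forall>y. \<bar>y\<bar> \<le> R \<longrightarrow> (\<forall>x. \<delta> * norm x \<le> norm (Delta L eps (Complex b y) *v x))"
proof -
  define S where "S = {0..e1} \<times> ({-R..R} \<times> sphere (0::complex^'n) 1)"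
  define F where "F = (\<lambda>p::real \<times> real \<times> (complex^'n). norm (Delta L (fst p) (Complex b (fst (snd p))) *v snd (snd p)))"
  have cS: "compact S" unfolding S_def by (intro compact_Times compact_sphere compact_Icc)
  have neS: "S \<noteq> {}"
  proof -
    obtain v :: "complex^'n" where "norm v = 1"
      using vector_choose_size[of 1] by auto
    then show ?thesis unfolding S_def using e1 R by auto
  qed
  have ce: "continuous_on UNIV (\<lambda>y. charM L (Complex b y) $ k $ j)" for k j
    by (rule lip_cont[OF lip])
  have Feq: "F = (\<lambda>p. norm ((\<chi> k. (of_real (fst p)^2 * (Complex b (fst (snd p)))^2 - Complex b (fst (snd p))) * snd (snd p) $ k)
          + (\<chi> k. \<Sum>j\<in>UNIV. charM L (Complex b (fst (snd p))) $ k $ j * snd (snd p) $ j)))"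
    unfolding F_def Delta_mv by (simp add: matrix_vector_mult_def)
  have cF: "continuous_on S F"
    unfolding Feq
    by (intro continuous_intros continuous_on_compose2[OF ce, where f="\<lambda>p. fst (snd p)"]) auto
  obtain p0 where p0: "p0 \<in> S" and pmin: "\<And>p. p \<in> S \<Longrightarrow> F p0 \<le> F p"
    using continuous_attains_inf[OF cS neS cF] by blast
  have "F p0 > 0"
  proof -
    obtain e y x where pe: "p0 = (e, y, x)" by (metis prod.exhaust)
    have "e \<in> {0..e1}" "norm x = 1" using p0 unfolding pe S_def by auto
    then have "det (Delta L e (Complex b y)) \<noteq> 0" "x \<noteq> 0" using nz by auto
    then have "Delta L e (Complex b y) *v x \<noteq> 0"
      using inj_matrix_vector_mult[of "Delta L e (Complex b y)"] invertible_det_nz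
      by (metis inj_eq matrix_vector_mult_0_right)
    then show ?thesis unfolding F_def pe by simp
  qed
  show ?thesis
  proof (intro exI[of _ "F p0"] conjI ballI allI impI)
    show "F p0 > 0" by fact
    fix eps y x assume eps: "eps \<in> {0..e1}" and y: "\<bar>y\<bar> \<le> R"
    show "F p0 * norm x \<le> norm (Delta L eps (Complex b y) *v x)"
    proof (cases "x = 0")
      case True then show ?thesis by simp
    next
      case False
      let ?x = "(1 / norm x) *\<^sub>R x"
      have "(eps, y, ?x) \<in> S" unfolding S_def using eps y False by (auto simp: abs_le_iff)
      then have "F p0 \<le> F (eps, y, ?x)" by (rule pmin)
      also have "F (eps, y, ?x) = norm (Delta L eps (Complex b y) *v x) / norm x"
        unfolding F_def by (simp add: mv_scaleR)
      finally show ?thesis using False by (simp add: field_simps)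
    qed
  qed
qed



lemma tri: "norm (a::'a::real_normed_vector) \<le> norm (a + m) + norm m"
  using norm_triangle_ineq4[of "a+m" m] by simp

lemma q_half:
  assumes "0 \<le> eps" "eps \<le> e1" "e1^2 * \<bar>b\<bar> \<le> 1/2"
  shows "cmod (of_real eps^2 * Complex b y - 1) \<ge> 1/2"
proof -
  have "eps^2 \<le> e1^2" using assms by (intro power_mono) auto
  then have "eps^2 * \<bar>b\<bar> \<le> 1/2" using assms(3) by (meson abs_ge_zero mult_right_mono order_trans)
  moreover have "eps^2 * b \<le> eps^2 * \<bar>b\<bar>" by (intro mult_left_mono) auto
  ultimately have "1/2 \<le> \<bar>Re (of_real eps^2 * Complex b y - 1)\<bar>" by simp
  also have "\<dots> \<le> cmod (of_real eps^2 * Complex b y - 1)" by (rule abs_Re_le_cmod)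
  finally show ?thesis .
qed

lemma q_eq: "cmod (of_real eps^2 * s^2 - s) = cmod s * cmod (of_real eps^2 * s - 1)"
proof -
  have "of_real eps^2 * s^2 - s = s * (of_real eps^2 * s - 1)" by (simp add: algebra_simps power2_eq_square)
  then show ?thesis by (simp add: norm_mult)
qed

lemma key_Delta:
  fixes L :: "(real \<Rightarrow> real^'n) \<Rightarrow> real^'n"
  assumes tau: "tau > 0" and dL: "delay_operator tau L"
    and nz: "\<forall>eps\<in>{0..e1}. \<forall>y. det (Delta L eps (Complex b y)) \<noteq> 0"
    and e1: "0 \<le> e1" "e1 \<le> 1" "e1^2 * \<bar>b\<bar> \<le> 1/2"
  shows "\<exists>B>0. \<exists>K\<ge>0. (\<forall>eps\<in>{0..e1}. \<forall>y x. cmod (of_real eps^2 * (Complex b y)^2 - Complex b y) * norm x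
              \<le> B * norm (Delta L eps (Complex b y) *v x))
           \<and> (\<forall>y x. norm (charM L (Complex b y) *v x) \<le> K * norm x)"
proof -
  obtain Kc Lc where KL: "\<And>y y' k j. cmod (charM L (Complex b y) $ k $ j) \<le> Kc"
     "\<And>y y' k j. cmod (charM L (Complex b y) $ k $ j - charM L (Complex b y') $ k $ j) \<le> Lc * \<bar>y - y'\<bar>"
    using charM_facts[OF dL tau, of b] by blast
  define K where "K = real CARD('n) * real CARD('n) * Kc"
  have Kc0: "Kc \<ge> 0" using KL(1) norm_ge_zero order_trans by blast
  have K0: "K \<ge> 0" unfolding K_def using Kc0 by simp
  have Mb: "norm (charM L (Complex b y) *v x) \<le> K * norm x" for y x
    unfolding K_def by (rule mat_bound) (rule KL(1))
  define R where "R = 4 * K + 1"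
  have R0: "R > 0" unfolding R_def using K0 by simp
  obtain \<delta> where d0: "\<delta> > 0" and dl: "\<forall>eps\<in>{0..e1}. \<forall>y. \<bar>y\<bar> \<le> R \<longrightarrow>
        (\<forall>x. \<delta> * norm x \<le> norm (Delta L eps (Complex b y) *v x))"
    using compact_lower[OF KL(2) nz e1(1), of R] R0 by auto
  define B where "B = max 2 (R * (R + 1) / \<delta>)"
  have B0: "B > 0" unfolding B_def by simp
  have main: "cmod (of_real eps^2 * (Complex b y)^2 - Complex b y) * norm x
              \<le> B * norm (Delta L eps (Complex b y) *v x)" if eps: "eps \<in> {0..e1}" for eps y x
  proof -
    define s where "s = Complex b y"
    define \<rho> where "\<rho> = cmod (of_real eps^2 * s^2 - s)"
    define q where "q = cmod (of_real eps^2 * s - 1)"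
    have q2: "q \<ge> 1/2" unfolding q_def s_def using q_half[of eps e1 b y] eps e1 by auto
    have rq: "\<rho> = cmod s * q" unfolding \<rho>_def q_def by (rule q_eq)
    have low: "(\<rho> - K) * norm x \<le> norm (Delta L eps s *v x)"
    proof -
      have "\<rho> * norm x = norm (\<chi> k. (of_real eps^2 * s^2 - s) * x$k)" unfolding \<rho>_def by (rule norm_cscale[symmetric])
      also have "\<dots> \<le> norm (Delta L eps s *v x) + norm (charM L s *v x)"
        unfolding Delta_mv by (rule tri)
      also have "\<dots> \<le> norm (Delta L eps s *v x) + K * norm x" using Mb[of y x] unfolding s_def by simp
      finally show ?thesis by (simp add: algebra_simps)
    qed
    show ?thesis
    proof (cases "cmod s \<ge> R")
      case True
      have "\<rho> \<ge> cmod s / 2" unfolding rq using q2 by (metis mult_left_mono norm_ge_zero mult.commute divide_real_def mult_1_right times_divide_eq_right)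
      then have "\<rho> \<ge> 2 * K" using True unfolding R_def by simp
      then have "\<rho> * norm x \<le> 2 * ((\<rho> - K) * norm x)"
        using mult_right_mono[OF \<open>\<rho> \<ge> 2 * K\<close> norm_ge_zero[of x]] by (simp add: algebra_simps)
      also have "\<dots> \<le> 2 * norm (Delta L eps s *v x)" using low by simp
      also have "\<dots> \<le> B * norm (Delta L eps s *v x)" unfolding B_def by (intro mult_right_mono) auto
      finally show ?thesis unfolding \<rho>_def s_def .
    next
      case False
      have "\<bar>y\<bar> \<le> R" using False abs_Im_le_cmod[of s] unfolding s_def by simp
      then have dx: "\<delta> * norm x \<le> norm (Delta L eps s *v x)" using dl eps unfolding s_def by blast
      have "eps^2 \<le> 1" using eps e1 by (simp add: power_le_one)
      have "q \<le> cmod (of_real eps^2 * s) + 1" unfolding q_def by (metis norm_one norm_triangle_ineq4)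
      also have "\<dots> = eps^2 * cmod s + 1" by (simp add: norm_mult norm_power)
      also have "\<dots> \<le> 1 * R + 1" using \<open>eps^2 \<le> 1\<close> False by (intro add_mono mult_mono) auto
      finally have "q \<le> R + 1" by simp
      then have "\<rho> \<le> R * (R + 1)" unfolding rq using False q2 R0
        by (intro mult_mono) auto
      then have "\<rho> * norm x \<le> (R * (R + 1) / \<delta>) * (\<delta> * norm x)"
        using d0 mult_right_mono[OF \<open>\<rho> \<le> R * (R + 1)\<close> norm_ge_zero[of x]] by simp
      also have "\<dots> \<le> (R * (R + 1) / \<delta>) * norm (Delta L eps s *v x)"
        using dx R0 d0 by (intro mult_left_mono) auto
      also have "\<dots> \<le> B * norm (Delta L eps s *v x)" unfolding B_def by (intro mult_right_mono) auto
      finally show ?thesis unfolding \<rho>_def s_def .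
    qed
  qed
  show ?thesis using B0 K0 main Mb by blast
qed



lemma sum_Plus_UNIV: "(\<Sum>p\<in>(UNIV::('a::finite + 'a) set). f p) = (\<Sum>k\<in>UNIV. f (Inl k)) + (\<Sum>k\<in>UNIV. f (Inr k))"
  by (subst UNIV_Plus_UNIV[symmetric], subst sum.Plus) (auto simp: o_def)

lemma Dmat_Inl: "(Dmat L eps s *v w) $ Inl k = s * w $ Inl k - w $ Inr k"
proof -
  have ifm: "(if P then c else 0) * z = (if P then c * z else 0)" for P and c z :: complex by simp
  show ?thesis
    unfolding matrix_vector_mult_def by (simp add: sum_Plus_UNIV Dmat_def ifm)
qed

lemma Dmat_Inr: "(Dmat L eps s *v w) $ Inr k
   = (charM L s *v (\<chi> j. w $ Inl j)) $ k / of_real eps^2 + (s - 1 / of_real eps^2) * w $ Inr k"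
proof -
  have ifm: "(if P then c else 0) * z = (if P then c * z else 0)" for P and c z :: complex by simp
  show ?thesis
    unfolding matrix_vector_mult_def
    by (simp add: sum_Plus_UNIV Dmat_def ifm sum_divide_distrib)
qed

lemma norm_comb: "norm (\<chi> k. a * (g::complex^'m) $ k + c * f $ k) \<le> cmod a * norm g + cmod c * norm f"
proof -
  have "(\<chi> k. a * g $ k + c * f $ k) = (\<chi> k. a * g $ k) + (\<chi> k. c * f $ k)" by (simp add: vec_eq_iff)
  then show ?thesis using norm_triangle_ineq[of "\<chi> k. a * g $ k" "\<chi> k. c * f $ k"] by (simp add: norm_cscale)
qed

lemma key_D:
  fixes L :: "(real \<Rightarrow> real^'n) \<Rightarrow> real^'n"
  assumes B0: "B > 0" and K0: "K \<ge> 0"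
    and DB: "\<And>x. cmod (of_real eps^2 * s^2 - s) * norm x \<le> B * norm (Delta L eps s *v x)"
    and Mb: "\<And>x. norm (charM L s *v x) \<le> K * norm x"
    and eps: "0 < eps" "eps \<le> 1" and q2: "cmod (of_real eps^2 * s - 1) \<ge> 1/2"
  shows "cmod s * norm w \<le> (B * (6 + 2 * K)) * norm (Dmat L eps s *v w)"
proof -
  define c where "c = (of_real eps^2 :: complex)"
  have c0: "c \<noteq> 0" unfolding c_def using eps by simp
  have cc: "complex_of_real eps * complex_of_real eps = c" by (simp add: c_def power2_eq_square)
  have cn: "cmod c = eps^2" unfolding c_def by (simp add: norm_power)
  define M where "M = charM L s"
  define u where "u = (\<chi> k. w $ Inl k)"
  define v where "v = (\<chi> k. w $ Inr k)"
  define f where "f = (\<chi> k. (Dmat L eps s *v w) $ Inl k)"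
  define g where "g = (\<chi> k. (Dmat L eps s *v w) $ Inr k)"
  have fk: "f $ k = s * u $ k - v $ k" for k unfolding f_def u_def v_def by (simp add: Dmat_Inl)
  have gk: "g $ k = (M *v u) $ k / c + (s - 1 / c) * v $ k" for k
    unfolding g_def u_def v_def M_def c_def by (simp add: Dmat_Inr)
  have Mf: "(M *v f) $ k = s * (M *v u) $ k - (M *v v) $ k" for k
    unfolding matrix_vector_mult_def by (simp add: fk sum_distrib_left sum_subtractf algebra_simps)
  have Du: "Delta L eps s *v u = (\<chi> k. c * g $ k + (c * s - 1) * f $ k)"
    unfolding Delta_mv vec_eq_iff using c0
    by (simp add: gk fk M_def[symmetric] c_def[symmetric] field_simps power2_eq_square cc)
  have Dv: "Delta L eps s *v v = (\<chi> k. (s * c) * g $ k) - M *v f"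
    unfolding Delta_mv vec_eq_iff using c0
    by (simp add: gk Mf M_def[symmetric] c_def[symmetric] field_simps power2_eq_square cc)
  define q where "q = cmod (c * s - 1)"
  have q2': "q \<ge> 1/2" unfolding q_def c_def using q2 by simp
  have rho: "cmod (of_real eps^2 * s^2 - s) = cmod s * q" unfolding q_def c_def by (rule q_eq)
  have e2: "eps^2 \<le> 1" using eps by (simp add: power_le_one)
  have cs: "cmod s * eps^2 \<le> q + 1"
  proof -
    have "cmod (c * s) \<le> q + 1" unfolding q_def by (metis norm_one norm_triangle_ineq4 diff_add_cancel norm_triangle_ineq)
    then show ?thesis by (simp add: norm_mult cn mult.commute)
  qed
  define a where "a = cmod s"
  define nu where "nu = norm u"
  define nv where "nv = norm v"
  define nf where "nf = norm f"
  define ng where "ng = norm g"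
  define nD where "nD = norm (Dmat L eps s *v w)"
  have nn: "a \<ge> 0" "nu \<ge> 0" "nv \<ge> 0" "nf \<ge> 0" "ng \<ge> 0"
    unfolding a_def nu_def nv_def nf_def ng_def by auto
  have hu: "a * q * nu \<le> B * (eps^2 * ng + q * nf)"
  proof -
    have "a * q * nu \<le> B * norm (Delta L eps s *v u)" using DB[of u] unfolding rho a_def nu_def .
    also have "\<dots> \<le> B * (eps^2 * ng + q * nf)"
      unfolding Du using norm_comb[of c g "c * s - 1" f] B0 unfolding ng_def nf_def q_def cn
      by (intro mult_left_mono) auto
    finally show ?thesis .
  qed
  have hv: "a * q * nv \<le> B * (a * eps^2 * ng + K * nf)"
  proof -
    have "a * q * nv \<le> B * norm (Delta L eps s *v v)" using DB[of v] unfolding rho a_def nv_def .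
    also have "norm (Delta L eps s *v v) \<le> a * eps^2 * ng + K * nf"
    proof -
      have "norm (Delta L eps s *v v) \<le> norm (\<chi> k. (s * c) * g $ k) + norm (M *v f)"
        unfolding Dv by (rule norm_triangle_ineq4)
      also have "\<dots> \<le> a * eps^2 * ng + K * nf"
        using Mb[of f] unfolding norm_cscale M_def nf_def ng_def a_def by (simp add: norm_mult cn)
      finally show ?thesis .
    qed
    then have "B * norm (Delta L eps s *v v) \<le> B * (a * eps^2 * ng + K * nf)"
      using B0 by (intro mult_left_mono) auto
    finally show ?thesis .
  qed
  have qpos: "q > 0" using q2' by simp
  have u2: "a * nu \<le> 2 * B * ng + B * nf"
  proof -
    have "B * (eps^2 * ng) \<le> B * (1 * ng)" using e2 B0 nn by (intro mult_left_mono mult_right_mono) auto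
    also have "\<dots> \<le> B * (2 * q * ng)" using q2' B0 nn by (intro mult_left_mono mult_right_mono) auto
    finally have "q * (a * nu) \<le> q * (2 * B * ng + B * nf)"
      using hu by (simp add: algebra_simps)
    then show ?thesis using qpos by simp
  qed
  have v2: "a * nv \<le> 3 * B * ng + 2 * B * K * nf"
  proof -
    have "B * (a * eps^2 * ng) \<le> B * ((q + 1) * ng)" using cs B0 nn unfolding a_def[symmetric]
      by (intro mult_left_mono mult_right_mono) auto
    also have "\<dots> \<le> B * (3 * q * ng)" using q2' B0 nn by (intro mult_left_mono mult_right_mono) auto
    finally have 1: "B * (a * eps^2 * ng) \<le> B * (3 * q * ng)" .
    have kq: "K \<le> 2 * q * K" using mult_right_mono[of 1 "2*q" K] q2' K0 by simp
    have "B * (K * nf) \<le> B * (2 * q * K * nf)" using kq B0 nn K0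
      by (intro mult_left_mono mult_right_mono) auto
    with 1 hv have "q * (a * nv) \<le> q * (3 * B * ng + 2 * B * K * nf)"
      by (simp add: algebra_simps)
    then show ?thesis using qpos by simp
  qed
  have w: "norm w \<le> nu + nv" unfolding nu_def nv_def u_def v_def by (rule split_norm(1))
  have fD: "nf \<le> nD" unfolding nf_def f_def nD_def by (rule split_norm(2))
  have gD: "ng \<le> nD" unfolding ng_def g_def nD_def by (rule split_norm(3))
  have "a * norm w \<le> a * nu + a * nv" using w nn by (simp add: mult_left_mono distrib_left[symmetric])
  also have "\<dots> \<le> 5 * B * ng + (B + 2 * B * K) * nf" using u2 v2 by (simp add: algebra_simps)
  also have "\<dots> \<le> 5 * B * nD + (B + 2 * B * K) * nD"
    using fD gD B0 K0 by (intro add_mono mult_left_mono) auto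
  also have "\<dots> \<le> (B * (6 + 2 * K)) * nD" using B0 nn fD by (simp add: algebra_simps)
  finally show ?thesis unfolding a_def nD_def .
qed



theorem lemma4p2:
  fixes tau :: real and L :: "(real \<Rightarrow> real^'n) \<Rightarrow> real^'n" and b eps0 :: real
  assumes "tau > 0" and "delay_operator tau L"
    and "0 < eps0" and "eps0 < 1"
    and "\<forall>eps\<in>{0..eps0}. \<forall>y::real. det (Delta L eps (Complex b y)) \<noteq> 0"
  shows "\<exists>eps1\<in>{0<..eps0}.
     bdd_above {cmod s * mnorm (matrix_inv (Delta L eps s)) | eps s. eps \<in> {0..eps1} \<and> Re s = b} \<and>
     bdd_above {cmod s * mnorm (matrix_inv (Dmat L eps s)) | eps s. eps \<in> {0<..eps1} \<and> Re s = b}"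
proof -
  define e1 where "e1 = min eps0 (1 / (2 * \<bar>b\<bar> + 2))"
  have e1p: "0 < e1" "e1 \<le> eps0" "e1 \<le> 1" unfolding e1_def using assms(3,4) by auto
  have "e1^2 \<le> e1" using e1p by (simp add: power2_eq_square mult_le_cancel_left1)
  have "e1 * \<bar>b\<bar> \<le> 1 / (2 * \<bar>b\<bar> + 2) * \<bar>b\<bar>" unfolding e1_def by (intro mult_right_mono) auto
  also have "\<dots> \<le> 1/2" by (simp add: field_simps)
  finally have e1b: "e1^2 * \<bar>b\<bar> \<le> 1/2"
    using mult_right_mono[OF \<open>e1^2 \<le> e1\<close>, of "\<bar>b\<bar>"] by simp
  have nz: "\<forall>eps\<in>{0..e1}. \<forall>y. det (Delta L eps (Complex b y)) \<noteq> 0" using assms(5) e1p by auto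
  obtain B K where B0: "B > 0" and K0: "K \<ge> 0"
    and DB: "\<And>eps y x. eps \<in> {0..e1} \<Longrightarrow> cmod (of_real eps^2 * (Complex b y)^2 - Complex b y) * norm x
              \<le> B * norm (Delta L eps (Complex b y) *v x)"
    and Mb: "\<And>y x. norm (charM L (Complex b y) *v x) \<le> K * norm x"
    using key_Delta[OF assms(1,2) nz less_imp_le[OF e1p(1)] e1p(3) e1b] by blast
  have sC: "s = Complex b (Im s)" if "Re s = b" for s using that by (simp add: complex_eq_iff)
  have A: "cmod s * mnorm (matrix_inv (Delta L eps s)) \<le> 2 * B" if eps: "eps \<in> {0..e1}" and s: "Re s = b" for eps s
  proof -
    have inv: "invertible (Delta L eps s)"
      using nz eps sC[OF s] invertible_det_nz by metis
    have q2: "cmod (of_real eps^2 * s - 1) \<ge> 1/2"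
      using q_half[of eps e1 b "Im s"] eps e1b sC[OF s] by auto
    show ?thesis
    proof (rule inv_bound[OF inv])
      fix x :: "complex^'n"
      have "cmod s * norm x \<le> 2 * (cmod s * cmod (of_real eps^2 * s - 1)) * norm x"
        using q2 mult_left_mono[OF q2, of "cmod s"] by (intro mult_right_mono) auto
      also have "\<dots> = 2 * (cmod (of_real eps^2 * s^2 - s) * norm x)" by (simp add: q_eq)
      also have "\<dots> \<le> 2 * (B * norm (Delta L eps s *v x))"
        using DB[OF eps, of "Im s" x] sC[OF s] by simp
      finally show "cmod s * norm x \<le> 2 * B * norm (Delta L eps s *v x)" by simp
    qed (use B0 in auto)
  qed
  have D: "cmod s * mnorm (matrix_inv (Dmat L eps s)) \<le> B * (6 + 2 * K)" if eps: "eps \<in> {0<..e1}" and s: "Re s = b" for eps s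
  proof (cases "s = 0")
    case True then show ?thesis using B0 K0 by simp
  next
    case False
    have eps': "eps \<in> {0..e1}" using eps by auto
    have q2: "cmod (of_real eps^2 * s - 1) \<ge> 1/2"
      using q_half[of eps e1 b "Im s"] eps e1b sC[OF s] by auto
    have kd: "cmod s * norm w \<le> (B * (6 + 2 * K)) * norm (Dmat L eps s *v w)" for w
    proof (rule key_D[OF B0 K0])
      show "cmod (of_real eps^2 * s^2 - s) * norm x \<le> B * norm (Delta L eps s *v x)" for x
        using DB[OF eps', of "Im s" x] sC[OF s] by simp
      show "norm (charM L s *v x) \<le> K * norm x" for x using Mb[of "Im s" x] sC[OF s] by simp
    qed (use eps e1p q2 in auto)
    have BK: "B * (6 + 2 * K) > 0" using B0 K0 by simp
    have inv: "invertible (Dmat L eps s)"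
    proof (rule lower_invertible)
      show "cmod s / (B * (6 + 2 * K)) > 0" using False BK by simp
      fix x :: "complex^('n+'n)" show "cmod s / (B * (6 + 2 * K)) * norm x \<le> norm (Dmat L eps s *v x)"
        using kd[of x] BK by (simp add: field_simps)
    qed
    show ?thesis by (rule inv_bound[OF inv]) (use kd BK in auto)
  qed
  show ?thesis
  proof (intro bexI[of _ e1] conjI)
    show "bdd_above {cmod s * mnorm (matrix_inv (Delta L eps s)) | eps s. eps \<in> {0..e1} \<and> Re s = b}"
      by (rule bdd_aboveI[of _ "2 * B"]) (use A in auto)
    show "bdd_above {cmod s * mnorm (matrix_inv (Dmat L eps s)) | eps s. eps \<in> {0<..e1} \<and> Re s = b}"
      by (rule bdd_aboveI[of _ "B * (6 + 2 * K)"]) (use D in auto)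
    show "e1 \<in> {0<..eps0}" using e1p by auto
  qed
qed

end
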